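(* Let $m\ge1$ and $1\le l\le m$. For $j\in\{l,\dots,m\}$ let $S_j=\{1,\dots,l-1\}\cup\{j\}$, and let $\mathcal R=\{S_l,\dots,S_m\}$. Define the CSS code on $n=2^m$ qubits by taking $H_X$ with $\mathrm{rs}(H_X)=\mathrm{RM}(l-1,m)$ and $H_Z$ with $\mathrm{rs}(H_Z)=\mathrm{RM}(m-l-1,m)+\mathrm{span}\{\mathrm{ev}(\hat x_S): S\subseteq[m],\ |S|=l,\ S\notin\mathcal R\}$. Then $H_XH_Z^T=0$, the code has parameters $[[2^m,\ m-l+1,\ \min(2^{m-l},2^l)]]$, and it is phantom (a CSS logical basis is given by $L_X$ with rows $\mathrm{ev}(x_{S_l}),\dots,\mathrm{ev}(x_{S_m})$ and $L_Z$ with rows $\mathrm{ev}(\hat x_{S_l}),\dots,\mathrm{ev}(\hat x_{S_m})$).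
   Context: Reed–Muller conventions: identify the $2^m$ coordinates with $\mathbb F_2^m$. For a Boolean polynomial $f\in\mathbb F_2[x_1,\dots,x_m]/(x_1^2-x_1,\dots,x_m^2-x_m)$, its evaluation vector is $\mathrm{ev}(f)=(f(a))_{a\in\mathbb F_2^m}\in\mathbb F_2^{2^m}$. $\mathrm{RM}(r,m)$ is the span of the evaluation vectors of all monomials of degree at most $r$ ($\mathrm{RM}(r,m)=\{0\}$ if $r<0$). For $S\subseteq[m]$, $x_S=\prod_{i\in S}x_i$ and its negated complement is $\hat x_S=\prod_{i\in[m]\setminus S}(1+x_i)$. CSS conventions: a CSS code is specified by $H_X,H_Z$ over $\mathbb F_2$ with $H_XH_Z^T=0$; $k=n-\operatorname{rank}H_X-\operatorname{rank}H_Z$; $d_X=\min\{|v|:v\in\ker H_Z\setminus\mathrm{rs}(H_X)\}$, $d_Z=\min\{|v|:v\in\ker H_X\setminus\mathrm{rs}(H_Z)\}$, $d=\min(d_X,d_Z)$, where $\mathrm{rs}$ is row space and $\ker M=\{v:Mv^T=0\}$. A CSS logical basis is $L_X,L_Z\in\mathbb F_2^{k\times n}$ with rows of $L_X$ in $\ker H_Z$, rows of $L_Z$ in $\ker H_X$, $L_XL_Z^T=I_k$. A permutation with matrix $P$ implements the logical CNOT circuit $A\in GL(k,\mathbb F_2)$ if $\mathrm{rs}(H_XP)=\mathrm{rs}(H_X)$, $\mathrm{rs}(H_ZP)=\mathrm{rs}(H_Z)$, rows of $L_XP-AL_X$ lie in $\mathrm{rs}(H_X)$ and rows of $L_ZP-A^{-T}L_Z$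 lie in $\mathrm{rs}(H_Z)$. The code is phantom if some CSS logical basis admits, for every ordered pair $a\ne b$ in $[k]$, a permutation implementing $I_k+E_{ab}$ ($E_{ab}$ the matrix unit). *)

theory Defs
  imports Main "HOL-Combinatorics.Permutations"
begin

text \<open>Coordinates: a point a of F_2^m is identified with its support set
  (a subset of {1..m}).  A vector of F_2^(2^m) is a function from points to bool
  (bool = F_2), required to vanish outside the points.\<close>

type_synonym vec = "nat set \<Rightarrow> bool"

definition pts :: "nat \<Rightarrow> nat set set" where
  "pts m = Pow {1..m}"

definition isvec :: "nat \<Rightarrow> vec \<Rightarrow> bool" where
  "isvec m v \<longleftrightarrow> (\<forall>a. v a \<longrightarrow> a \<in> pts m)"

definition vzero :: vec where "vzero = (\<lambda>a. False)"

definition vadd :: "vec \<Rightarrow> vec \<Rightarrow> vec" where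
  "vadd u v = (\<lambda>a. u a \<noteq> v a)"

definition weight :: "vec \<Rightarrow> nat" where
  "weight v = card {a. v a}"

definition dot :: "nat \<Rightarrow> vec \<Rightarrow> vec \<Rightarrow> bool" where
  "dot m u v \<longleftrightarrow> odd (card {a \<in> pts m. u a \<and> v a})"

inductive_set vspan :: "vec set \<Rightarrow> vec set" for B :: "vec set" where
  zero: "vzero \<in> vspan B"
| add: "v \<in> B \<Longrightarrow> w \<in> vspan B \<Longrightarrow> vadd v w \<in> vspan B"

definition vdim :: "vec set \<Rightarrow> nat" where
  "vdim V = (LEAST d. \<exists>B. finite B \<and> card B = d \<and> B \<subseteq> V \<and> vspan B = V)"

definition ev_mono :: "nat \<Rightarrow> nat set \<Rightarrow> vec" where
  "ev_mono m S = (\<lambda>a. a \<in> pts m \<and> S \<subseteq> a)"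

definition ev_hat :: "nat \<Rightarrow> nat set \<Rightarrow> vec" where
  "ev_hat m S = (\<lambda>a. a \<in> pts m \<and> ({1..m} - S) \<inter> a = {})"

text \<open>Reed--Muller code RM(r,m); r is an integer, RM(r,m) = {0} for r < 0.\<close>
definition RM :: "int \<Rightarrow> nat \<Rightarrow> vec set" where
  "RM r m = vspan {ev_mono m S | S. S \<subseteq> {1..m} \<and> int (card S) \<le> r}"

text \<open>Matrices with n = 2^m columns are given as lists of rows.\<close>
definition rs :: "vec list \<Rightarrow> vec set" where
  "rs H = vspan (set H)"

definition rank :: "vec list \<Rightarrow> nat" where
  "rank H = vdim (rs H)"

definition kerM :: "nat \<Rightarrow> vec list \<Rightarrow> vec set" where
  "kerM m H = {v. isvec m v \<and> (\<forall>h \<in> set H. \<not> dot m h v)}"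

definition orth :: "nat \<Rightarrow> vec list \<Rightarrow> vec list \<Rightarrow> bool" where
  "orth m HX HZ \<longleftrightarrow> (\<forall>h \<in> set HX. \<forall>g \<in> set HZ. \<not> dot m h g)"

definition css_k :: "nat \<Rightarrow> vec list \<Rightarrow> vec list \<Rightarrow> int" where
  "css_k m HX HZ = int (2^m) - int (rank HX) - int (rank HZ)"

definition min_weight :: "vec set \<Rightarrow> nat" where
  "min_weight V = Inf (weight ` V)"

definition css_dX :: "nat \<Rightarrow> vec list \<Rightarrow> vec list \<Rightarrow> nat" where
  "css_dX m HX HZ = min_weight (kerM m HZ - rs HX)"

definition css_dZ :: "nat \<Rightarrow> vec list \<Rightarrow> vec list \<Rightarrow> nat" where
  "css_dZ m HX HZ = min_weight (kerM m HX - rs HZ)"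

definition css_d :: "nat \<Rightarrow> vec list \<Rightarrow> vec list \<Rightarrow> nat" where
  "css_d m HX HZ = min (css_dX m HX HZ) (css_dZ m HX HZ)"

text \<open>k x k matrices over F_2 are functions nat => nat => bool (indices 0..<k);
  k x n matrices are families of row vectors nat => vec.  (A L)_i = sum_j A_ij L_j.\<close>
definition mmul :: "nat \<Rightarrow> (nat \<Rightarrow> nat \<Rightarrow> bool) \<Rightarrow> (nat \<Rightarrow> vec) \<Rightarrow> nat \<Rightarrow> vec" where
  "mmul k A L i = (\<lambda>a. odd (card {j \<in> {..<k}. A i j \<and> L j a}))"

definition logical_basis ::
  "nat \<Rightarrow> vec list \<Rightarrow> vec list \<Rightarrow> nat \<Rightarrow> (nat \<Rightarrow> vec) \<Rightarrow> (nat \<Rightarrow> vec) \<Rightarrow> bool" where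
  "logical_basis m HX HZ k LX LZ \<longleftrightarrow>
     (\<forall>i<k. LX i \<in> kerM m HZ) \<and> (\<forall>i<k. LZ i \<in> kerM m HX) \<and>
     (\<forall>i<k. \<forall>j<k. dot m (LX i) (LZ j) = (i = j))"

text \<open>Action of the permutation matrix of sigma on a row vector (v P).\<close>
definition vperm :: "(nat set \<Rightarrow> nat set) \<Rightarrow> vec \<Rightarrow> vec" where
  "vperm \<sigma> v = v \<circ> \<sigma>"

text \<open>B is A^{-T} iff A B^T = I.\<close>
definition implements ::
  "nat \<Rightarrow> vec list \<Rightarrow> vec list \<Rightarrow> nat \<Rightarrow> (nat \<Rightarrow> vec) \<Rightarrow> (nat \<Rightarrow> vec)
   \<Rightarrow> (nat set \<Rightarrow> nat set) \<Rightarrow> (nat \<Rightarrow> nat \<Rightarrow> bool) \<Rightarrow> bool" where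
  "implements m HX HZ k LX LZ \<sigma> A \<longleftrightarrow>
     \<sigma> permutes pts m \<and>
     rs (map (vperm \<sigma>) HX) = rs HX \<and> rs (map (vperm \<sigma>) HZ) = rs HZ \<and>
     (\<exists>B. (\<forall>i<k. \<forall>j<k. odd (card {t \<in> {..<k}. A i t \<and> B j t}) = (i = j)) \<and>
          (\<forall>i<k. vadd (vperm \<sigma> (LX i)) (mmul k A LX i) \<in> rs HX) \<and>
          (\<forall>i<k. vadd (vperm \<sigma> (LZ i)) (mmul k B LZ i) \<in> rs HZ))"

definition transvection :: "nat \<Rightarrow> nat \<Rightarrow> nat \<Rightarrow> nat \<Rightarrow> bool" where
  "transvection a b = (\<lambda>i j. (i = j) \<noteq> (i = a \<and> j = b))"

definition phantom :: "nat \<Rightarrow> vec list \<Rightarrow> vec list \<Rightarrow> bool" where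
  "phantom m HX HZ \<longleftrightarrow>
     (\<exists>LX LZ. logical_basis m HX HZ (nat (css_k m HX HZ)) LX LZ \<and>
        (\<forall>a < nat (css_k m HX HZ). \<forall>b < nat (css_k m HX HZ). a \<noteq> b \<longrightarrow>
           (\<exists>\<sigma>. implements m HX HZ (nat (css_k m HX HZ)) LX LZ \<sigma> (transvection a b))))"

end

theory Submission
  imports Defs
begin


section \<open>Vector algebra\<close>

lemma vadd_assoc: "vadd (vadd u v) w = vadd u (vadd v w)"
  unfolding vadd_def by auto
lemma vadd_comm: "vadd u v = vadd v u"
  unfolding vadd_def by auto
lemma vadd_self: "vadd v v = vzero"
  unfolding vadd_def vzero_def by auto
lemma vadd_zero[simp]: "vadd vzero v = v" "vadd v vzero = v"
  unfolding vadd_def vzero_def by auto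
lemma vadd_cancel: "vadd v (vadd v w) = w"
  unfolding vadd_def by auto

lemma vspan_base: "v \<in> B \<Longrightarrow> v \<in> vspan B"
  using vspan.add[OF _ vspan.zero, of v B] by simp

lemma vspan_vadd: "u \<in> vspan B \<Longrightarrow> w \<in> vspan B \<Longrightarrow> vadd u w \<in> vspan B"
proof (induction u rule: vspan.induct)
  case zero then show ?case by simp
next
  case (add v w') then show ?case by (simp add: vadd_assoc vspan.add)
qed

lemma vspan_induct_prop:
  assumes "u \<in> vspan B" "Q vzero" "\<And>v w. v \<in> B \<Longrightarrow> Q w \<Longrightarrow> Q (vadd v w)"
  shows "Q u"
  using assms(1) by (induction u rule: vspan.induct) (auto intro: assms)

lemma vspan_sub: "A \<subseteq> vspan B \<Longrightarrow> vspan A \<subseteq> vspan B"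
proof
  fix x assume "A \<subseteq> vspan B" "x \<in> vspan A"
  then show "x \<in> vspan B"
    by (auto elim!: vspan_induct_prop[where Q="\<lambda>x. x \<in> vspan B"] intro: vspan.zero vspan_vadd)
qed

lemma vspan_mono: "A \<subseteq> B \<Longrightarrow> vspan A \<subseteq> vspan B"
  by (rule vspan_sub) (auto intro: vspan_base)

lemma vspan_idem_un: "vspan (vspan A \<union> C) = vspan (A \<union> C)"
proof
  show "vspan (vspan A \<union> C) \<subseteq> vspan (A \<union> C)"
    apply (rule vspan_sub)
    using vspan_mono[of A "A \<union> C"] by (auto intro: vspan_base)
  show "vspan (A \<union> C) \<subseteq> vspan (vspan A \<union> C)"
    by (rule vspan_mono) (auto intro: vspan_base)
qed

section \<open>Indexed sums\<close>

definition lsum :: "('i \<Rightarrow> vec) \<Rightarrow> 'i set \<Rightarrow> vec" where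
  "lsum f G = (\<lambda>a. odd (card {T \<in> G. f T a}))"

lemma lsum_empty[simp]: "lsum f {} = vzero"
  unfolding lsum_def vzero_def by simp

lemma lsum_insert:
  assumes "finite G" "T \<notin> G"
  shows "lsum f (insert T G) = vadd (f T) (lsum f G)"
proof
  fix a
  have "{T' \<in> insert T G. f T' a} = (if f T a then insert T {T' \<in> G. f T' a} else {T' \<in> G. f T' a})"
    by auto
  moreover have "finite {T' \<in> G. f T' a}" using assms by simp
  ultimately show "lsum f (insert T G) a = vadd (f T) (lsum f G) a"
    unfolding lsum_def vadd_def using assms by auto
qed

lemma lsum_remove:
  assumes "finite G" "T \<in> G"
  shows "lsum f (G - {T}) = vadd (f T) (lsum f G)"
proof -
  have "G = insert T (G - {T})" using assms by auto
  then have "lsum f G = vadd (f T) (lsum f (G - {T}))"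
    using lsum_insert[of "G - {T}" T f] assms by (metis Diff_iff finite_Diff singletonI)
  then show ?thesis by (simp add: vadd_cancel)
qed

lemma lsum_mem:
  assumes "finite G" "G \<subseteq> F"
  shows "lsum f G \<in> vspan (f ` F)"
  using assms
proof (induction G rule: finite_induct)
  case empty then show ?case by (simp add: vspan.zero)
next
  case (insert T G)
  then show ?case by (simp add: lsum_insert vspan.add)
qed

lemma vspan_lsum:
  assumes "finite B" "u \<in> vspan B"
  shows "\<exists>B'. B' \<subseteq> B \<and> u = lsum id B'"
  using assms(2)
proof (induction u rule: vspan.induct)
  case zero then show ?case by (intro exI[of _ "{}"]) simp
next
  case (add v w)
  then obtain B' where B': "B' \<subseteq> B" "w = lsum id B'" by blast
  have fin: "finite B'" using B' assms(1) finite_subset by blast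
  show ?case
  proof (cases "v \<in> B'")
    case True
    have "vadd v w = lsum id (B' - {v})" using lsum_remove[OF fin True, of id] B' by simp
    then show ?thesis using B' by blast
  next
    case False
    have "vadd v w = lsum id (insert v B')" using lsum_insert[OF fin False, of id] B' by simp
    then show ?thesis using B' add by blast
  qed
qed

lemma card_vspan_le:
  assumes "finite B"
  shows "finite (vspan B) \<and> card (vspan B) \<le> 2 ^ card B"
proof -
  have "vspan B \<subseteq> lsum id ` Pow B" using vspan_lsum[OF assms] by blast
  moreover have "card (lsum id ` Pow B) \<le> 2 ^ card B"
    using card_image_le[of "Pow B" "lsum id"] assms by (simp add: card_Pow)
  moreover have "finite (lsum id ` Pow B)" using assms by simp
  ultimately show ?thesis using card_mono[of "lsum id ` Pow B" "vspan B"] finite_subset by fastforce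
qed

lemma odd_sum_card:
  assumes "finite A"
  shows "odd (\<Sum>x\<in>A. h x :: nat) = odd (card {x\<in>A. odd (h x)})"
  using assms
proof (induction A rule: finite_induct)
  case empty then show ?case by simp
next
  case (insert x A)
  have "{y \<in> insert x A. odd (h y)} = (if odd (h x) then insert x {y\<in>A. odd (h y)} else {y\<in>A. odd (h y)})"
    by auto
  then show ?case using insert by auto
qed

lemma card_filter_sum: "finite B \<Longrightarrow> card {y\<in>B. P y} = (\<Sum>y\<in>B. if P y then 1 else 0 :: nat)"
  by (simp add: sum.If_cases Int_def conj_commute)

lemma odd_swap:
  assumes "finite A" "finite B"
  shows "odd (card {x\<in>A. odd (card {y\<in>B. R x y})}) = odd (card {y\<in>B. odd (card {x\<in>A. R x y})})"
proof -
  have "odd (card {x\<in>A. odd (card {y\<in>B. R x y})}) = odd (\<Sum>x\<in>A. card {y\<in>B. R x y})"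
    using odd_sum_card[OF assms(1)] by simp
  also have "(\<Sum>x\<in>A. card {y\<in>B. R x y}) = (\<Sum>x\<in>A. \<Sum>y\<in>B. if R x y then 1 else 0)"
    using card_filter_sum[OF assms(2)] by simp
  also have "\<dots> = (\<Sum>y\<in>B. \<Sum>x\<in>A. if R x y then 1 else 0)" by (rule sum.swap)
  also have "\<dots> = (\<Sum>y\<in>B. card {x\<in>A. R x y})"
    using card_filter_sum[OF assms(1)] by simp
  finally show ?thesis using odd_sum_card[OF assms(2)] by simp
qed

lemma card_interval:
  assumes "finite B" "A \<subseteq> B"
  shows "card {a. A \<subseteq> a \<and> a \<subseteq> B} = 2 ^ card (B - A)"
proof -
  have "{a. A \<subseteq> a \<and> a \<subseteq> B} = (\<lambda>c. A \<union> c) ` Pow (B - A)"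
  proof (intro equalityI subsetI)
    fix x assume "x \<in> {a. A \<subseteq> a \<and> a \<subseteq> B}"
    then show "x \<in> (\<lambda>c. A \<union> c) ` Pow (B - A)" by (intro image_eqI[of _ _ "x - A"]) auto
  qed (use assms in auto)
  moreover have "inj_on (\<lambda>c. A \<union> c) (Pow (B - A))" by (auto simp: inj_on_def)
  ultimately show ?thesis using assms by (simp add: card_image card_Pow)
qed

lemma odd_interval:
  assumes "finite B"
  shows "odd (card {a. A \<subseteq> a \<and> a \<subseteq> B}) \<longleftrightarrow> A = B"
proof (cases "A \<subseteq> B")
  case True
  then have "finite (B - A)" using assms by simp
  then have "card (B - A) = 0 \<longleftrightarrow> B - A = {}" by simp
  then show ?thesis using card_interval[OF assms True] True by auto
next
  case False
  then have e: "{a. A \<subseteq> a \<and> a \<subseteq> B} = {}" by auto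
  have "A \<noteq> B" using False by auto
  then show ?thesis by (simp only: e card.empty) simp
qed

section \<open>Points and basic vectors\<close>

lemma finite_pts[simp]: "finite (pts m)" unfolding pts_def by simp

lemma isvec_vadd: "isvec m u \<Longrightarrow> isvec m w \<Longrightarrow> isvec m (vadd u w)"
  unfolding isvec_def vadd_def by auto

lemma isvec_zero: "isvec m vzero" unfolding isvec_def vzero_def by simp

lemma isvec_span: "(\<forall>b\<in>B. isvec m b) \<Longrightarrow> u \<in> vspan B \<Longrightarrow> isvec m u"
  by (erule vspan_induct_prop[where Q="isvec m"]) (auto intro: isvec_zero isvec_vadd)

lemma isvec_mono[simp]: "isvec m (ev_mono m T)" unfolding isvec_def ev_mono_def by simp
lemma isvec_hat[simp]: "isvec m (ev_hat m T)" unfolding isvec_def ev_hat_def by simp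

lemma dot_sym: "dot m u v = dot m v u"
  unfolding dot_def by (simp add: conj_commute)

lemma odd_shift: "(x::nat) + 2 * c = y \<Longrightarrow> odd x = odd y" by presburger

lemma card_symdiff:
  assumes "finite A" "finite B"
  shows "card ((A - B) \<union> (B - A)) + 2 * card (A \<inter> B) = card A + card B"
proof -
  have "card ((A - B) \<union> (B - A)) = card (A - B) + card (B - A)"
    by (rule card_Un_disjoint) (use assms in auto)
  moreover have "card A = card (A - B) + card (A \<inter> B)"
    using card_Diff_subset_Int[of A B] card_mono[of A "A \<inter> B"] assms by simp
  moreover have "card B = card (B - A) + card (A \<inter> B)"
    using card_Diff_subset_Int[of B A] card_mono[of B "B \<inter> A"] assms by (simp add: Int_commute)
  ultimately show ?thesis by simp
qed

lemma dot_vadd: "dot m (vadd u w) v = (dot m u v \<noteq> dot m w v)"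
proof -
  let ?A = "{a \<in> pts m. u a \<and> v a}" and ?B = "{a \<in> pts m. w a \<and> v a}"
  have "{a \<in> pts m. vadd u w a \<and> v a} = (?A - ?B) \<union> (?B - ?A)"
    unfolding vadd_def by auto
  moreover have "card ((?A - ?B) \<union> (?B - ?A)) + 2 * card (?A \<inter> ?B) = card ?A + card ?B"
    by (rule card_symdiff) auto
  ultimately have "card {a \<in> pts m. vadd u w a \<and> v a} + 2 * card (?A \<inter> ?B) = card ?A + card ?B"
    by simp
  then have "odd (card {a \<in> pts m. vadd u w a \<and> v a}) = odd (card ?A + card ?B)"
    by (rule odd_shift)
  then show ?thesis unfolding dot_def by simp
qed

lemma dot_zero: "\<not> dot m vzero v" unfolding dot_def vzero_def by simp

lemma dot_span: "(\<forall>b\<in>B. \<not> dot m b v) \<Longrightarrow> u \<in> vspan B \<Longrightarrow> \<not> dot m u v"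
  by (erule vspan_induct_prop[where Q="\<lambda>u. \<not> dot m u v"]) (auto simp: dot_zero dot_vadd)

lemma dot_lsum:
  assumes "finite G"
  shows "dot m (lsum f G) w = odd (card {T\<in>G. dot m (f T) w})"
proof -
  have e: "(odd (card {T\<in>G. f T a}) \<and> w a) = odd (card {T\<in>G. f T a \<and> w a})" for a
    by (cases "w a") simp_all
  have "dot m (lsum f G) w = odd (card {a\<in>pts m. odd (card {T\<in>G. f T a \<and> w a})})"
    unfolding dot_def lsum_def e ..
  also have "\<dots> = odd (card {T\<in>G. odd (card {a\<in>pts m. f T a \<and> w a})})"
    by (rule odd_swap) (auto simp: assms)
  finally show ?thesis unfolding dot_def .
qed




lemma hat_eq: "S \<subseteq> {1..m} \<Longrightarrow> ev_hat m S a = (a \<subseteq> S)"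
  unfolding ev_hat_def pts_def by auto

lemma mono_eq: "ev_mono m T a = (a \<subseteq> {1..m} \<and> T \<subseteq> a)"
  unfolding ev_mono_def pts_def by auto

lemma card_M[simp]: "card {1..m::nat} = m" by simp

lemma dot_mono_hat:
  assumes "T \<subseteq> {1..m}" "S \<subseteq> {1..m}"
  shows "dot m (ev_mono m T) (ev_hat m S) = (T = S)"
proof -
  have "{a \<in> pts m. ev_mono m T a \<and> ev_hat m S a} = {a. T \<subseteq> a \<and> a \<subseteq> S}"
    using assms by (auto simp: hat_eq mono_eq pts_def)
  moreover have "finite S" using assms(2) finite_subset by blast
  ultimately show ?thesis unfolding dot_def using odd_interval[of S T] by simp
qed

lemma dot_hat_hat:
  assumes "T \<subseteq> {1..m}" "S \<subseteq> {1..m}"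
  shows "dot m (ev_hat m S) (ev_hat m T) = (S \<inter> T = {})"
proof -
  have "{a \<in> pts m. ev_hat m S a \<and> ev_hat m T a} = {a. {} \<subseteq> a \<and> a \<subseteq> S \<inter> T}"
    using assms by (auto simp: hat_eq pts_def)
  then show ?thesis unfolding dot_def using odd_interval[of "S \<inter> T" "{}"] assms finite_subset
    by (metis finite_Int finite_atLeastAtMost)
qed

lemma dot_mono_mono:
  assumes "T \<subseteq> {1..m}" "S \<subseteq> {1..m}"
  shows "dot m (ev_mono m T) (ev_mono m S) = (T \<union> S = {1..m})"
proof -
  have "{a \<in> pts m. ev_mono m T a \<and> ev_mono m S a} = {a. T \<union> S \<subseteq> a \<and> a \<subseteq> {1..m}}"
    using assms by (auto simp: mono_eq pts_def)
  then show ?thesis unfolding dot_def using odd_interval[of "{1..m}" "T \<union> S"] by simp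
qed

lemma expand_mono:
  assumes v: "isvec m v"
  shows "v = lsum (ev_mono m) {T. T \<subseteq> {1..m} \<and> dot m v (ev_hat m T)}"
proof
  fix a
  show "v a = lsum (ev_mono m) {T. T \<subseteq> {1..m} \<and> dot m v (ev_hat m T)} a"
  proof (cases "a \<subseteq> {1..m}")
    case False
    then have "\<not> v a" using v unfolding isvec_def pts_def by auto
    moreover have e: "{T \<in> {T. T \<subseteq> {1..m} \<and> dot m v (ev_hat m T)}. ev_mono m T a} = {}"
      using False by (auto simp: mono_eq)
    ultimately show ?thesis unfolding lsum_def e by simp
  next
    case True
    have d: "dot m v (ev_hat m T) = odd (card {c \<in> pts m. v c \<and> c \<subseteq> T})" if "T \<subseteq> a" for T
    proof -
      have "{c \<in> pts m. v c \<and> ev_hat m T c} = {c \<in> pts m. v c \<and> c \<subseteq> T}"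
        using that True hat_eq[of T m] by auto
      then show ?thesis unfolding dot_def by simp
    qed
    have "{T \<in> {T. T \<subseteq> {1..m} \<and> dot m v (ev_hat m T)}. ev_mono m T a}
        = {T \<in> Pow a. odd (card {c \<in> pts m. v c \<and> c \<subseteq> T})}"
      using True d by (auto simp: mono_eq)
    then have "lsum (ev_mono m) {T. T \<subseteq> {1..m} \<and> dot m v (ev_hat m T)} a
        = odd (card {T \<in> Pow a. odd (card {c \<in> pts m. v c \<and> c \<subseteq> T})})"
      unfolding lsum_def by simp
    also have "\<dots> = odd (card {c \<in> pts m. odd (card {T \<in> Pow a. v c \<and> c \<subseteq> T})})"
      by (rule odd_swap) (use True finite_subset in auto)
    also have "{c \<in> pts m. odd (card {T \<in> Pow a. v c \<and> c \<subseteq> T})} = (if v a then {a} else {})"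
    proof -
      have "odd (card {T \<in> Pow a. v c \<and> c \<subseteq> T}) = (v c \<and> c = a)" for c
      proof (cases "v c")
        case True
        have "{T \<in> Pow a. v c \<and> c \<subseteq> T} = {T. c \<subseteq> T \<and> T \<subseteq> a}" using True by auto
        then show ?thesis using odd_interval[of a c] \<open>a \<subseteq> {1..m}\<close> finite_subset True by auto
      qed simp
      then show ?thesis using True by (auto simp: pts_def)
    qed
    finally show ?thesis by simp
  qed
qed

lemma expand_hat:
  assumes v: "isvec m v"
  shows "v = lsum (ev_hat m) {S. S \<subseteq> {1..m} \<and> dot m v (ev_mono m S)}"
proof
  fix a
  show "v a = lsum (ev_hat m) {S. S \<subseteq> {1..m} \<and> dot m v (ev_mono m S)} a"
  proof (cases "a \<subseteq> {1..m}")
    case False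
    then have "\<not> v a" using v unfolding isvec_def pts_def by auto
    moreover have e: "{T \<in> {S. S \<subseteq> {1..m} \<and> dot m v (ev_mono m S)}. ev_hat m T a} = {}"
      using False by (auto simp: ev_hat_def pts_def)
    ultimately show ?thesis unfolding lsum_def e by simp
  next
    case True
    have d: "dot m v (ev_mono m S) = odd (card {c \<in> pts m. v c \<and> S \<subseteq> c})" for S
    proof -
      have "{c \<in> pts m. v c \<and> ev_mono m S c} = {c \<in> pts m. v c \<and> S \<subseteq> c}"
        by (auto simp: mono_eq pts_def)
      then show ?thesis unfolding dot_def by simp
    qed
    have "{S \<in> {S. S \<subseteq> {1..m} \<and> dot m v (ev_mono m S)}. ev_hat m S a}
        = {S \<in> {S. a \<subseteq> S \<and> S \<subseteq> {1..m}}. odd (card {c \<in> pts m. v c \<and> S \<subseteq> c})}"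
      using True d hat_eq[of _ m a] by auto
    then have "lsum (ev_hat m) {S. S \<subseteq> {1..m} \<and> dot m v (ev_mono m S)} a
        = odd (card {S \<in> {S. a \<subseteq> S \<and> S \<subseteq> {1..m}}. odd (card {c \<in> pts m. v c \<and> S \<subseteq> c})})"
      unfolding lsum_def by simp
    also have "\<dots> = odd (card {c \<in> pts m. odd (card {S \<in> {S. a \<subseteq> S \<and> S \<subseteq> {1..m}}. v c \<and> S \<subseteq> c})})"
      by (rule odd_swap) auto
    also have "{c \<in> pts m. odd (card {S \<in> {S. a \<subseteq> S \<and> S \<subseteq> {1..m}}. v c \<and> S \<subseteq> c})} = (if v a then {a} else {})"
    proof -
      have "odd (card {S \<in> {S. a \<subseteq> S \<and> S \<subseteq> {1..m}}. v c \<and> S \<subseteq> c}) = (v c \<and> c = a)"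
        if c: "c \<in> pts m" for c
      proof (cases "v c")
        case True
        have "{S \<in> {S. a \<subseteq> S \<and> S \<subseteq> {1..m}}. v c \<and> S \<subseteq> c} = {S. a \<subseteq> S \<and> S \<subseteq> c}"
          using True c by (auto simp: pts_def)
        then show ?thesis using odd_interval[of c a] c finite_subset True by (auto simp: pts_def)
      qed simp
      then show ?thesis using True by (auto simp: pts_def)
    qed
    finally show ?thesis by simp
  qed
qed

lemma finite_PowM: "F \<subseteq> Pow {1..(m::nat)} \<Longrightarrow> finite F"
  by (rule finite_subset[of _ "Pow {1..m}"]) auto

locale dualpair =
  fixes m :: nat and f g :: "nat set \<Rightarrow> vec"
  assumes f_isvec: "isvec m (f T)"
    and fg: "T \<subseteq> {1..m} \<Longrightarrow> S \<subseteq> {1..m} \<Longrightarrow> dot m (f T) (g S) = (T = S)"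
    and expand: "isvec m v \<Longrightarrow> v = lsum f {T. T \<subseteq> {1..m} \<and> dot m v (g T)}"
begin

lemma char:
  assumes F: "F \<subseteq> Pow {1..m}"
  shows "v \<in> vspan (f ` F) \<longleftrightarrow> isvec m v \<and> (\<forall>T. T \<subseteq> {1..m} \<and> T \<notin> F \<longrightarrow> \<not> dot m v (g T))"
proof
  assume v: "v \<in> vspan (f ` F)"
  have "isvec m v" using isvec_span[OF _ v] f_isvec by blast
  moreover have "\<not> dot m v (g T)" if "T \<subseteq> {1..m}" "T \<notin> F" for T
  proof (rule dot_span[OF _ v], intro ballI)
    fix b assume "b \<in> f ` F"
    then obtain T' where "T' \<in> F" "b = f T'" by blast
    then show "\<not> dot m b (g T)" using fg[of T' T] F that by auto
  qed
  ultimately show "isvec m v \<and> (\<forall>T. T \<subseteq> {1..m} \<and> T \<notin> F \<longrightarrow> \<not> dot m v (g T))" by blast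
next
  assume h: "isvec m v \<and> (\<forall>T. T \<subseteq> {1..m} \<and> T \<notin> F \<longrightarrow> \<not> dot m v (g T))"
  have sub: "{T. T \<subseteq> {1..m} \<and> dot m v (g T)} \<subseteq> F" using h by blast
  have fin: "finite {T. T \<subseteq> {1..m} \<and> dot m v (g T)}" by (rule finite_subset[of _ "Pow {1..m}"]) auto
  have "v = lsum f {T. T \<subseteq> {1..m} \<and> dot m v (g T)}" using expand h by blast
  then show "v \<in> vspan (f ` F)" using lsum_mem[OF fin sub, of f] by simp
qed

lemma coefs:
  assumes F: "F \<subseteq> Pow {1..m}" and v: "v \<in> vspan (f ` F)"
  shows "{T. T \<subseteq> {1..m} \<and> dot m v (g T)} \<subseteq> F" "v = lsum f {T. T \<subseteq> {1..m} \<and> dot m v (g T)}"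
proof -
  have h: "isvec m v" "\<forall>T. T \<subseteq> {1..m} \<and> T \<notin> F \<longrightarrow> \<not> dot m v (g T)"
    using iffD1[OF char[OF F, of v] v] by blast+
  show "{T. T \<subseteq> {1..m} \<and> dot m v (g T)} \<subseteq> F" using h(2) by blast
  show "v = lsum f {T. T \<subseteq> {1..m} \<and> dot m v (g T)}" by (rule expand[OF h(1)])
qed

lemma dot_lsum_g:
  assumes G: "G \<subseteq> Pow {1..m}" and T: "T \<subseteq> {1..m}"
  shows "dot m (lsum f G) (g T) = (T \<in> G)"
proof -
  have fin: "finite G" using G by (rule finite_PowM)
  have "{T' \<in> G. dot m (f T') (g T)} = {T' \<in> G. T' = T}"
  proof (rule Collect_cong)
    fix T' show "(T' \<in> G \<and> dot m (f T') (g T)) = (T' \<in> G \<and> T' = T)"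
      using fg[of T' T] G T by blast
  qed
  also have "\<dots> = (if T \<in> G then {T} else {})" by auto
  finally show ?thesis using dot_lsum[OF fin] by simp
qed

lemma inj_f: "inj_on f (Pow {1..m})"
proof (rule inj_onI)
  fix T T' assume "T \<in> Pow {1..m}" "T' \<in> Pow {1..m}" "f T = f T'"
  then have "dot m (f T') (g T)" using fg[of T T] by simp
  then show "T = T'" using fg[of T' T] \<open>T \<in> Pow {1..m}\<close> \<open>T' \<in> Pow {1..m}\<close> by simp
qed

lemma span_eq_img:
  assumes F: "F \<subseteq> Pow {1..m}"
  shows "vspan (f ` F) = lsum f ` Pow F"
proof
  show "vspan (f ` F) \<subseteq> lsum f ` Pow F"
    using coefs[OF F] by blast
  show "lsum f ` Pow F \<subseteq> vspan (f ` F)"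
  proof (rule image_subsetI)
    fix G assume "G \<in> Pow F"
    then show "lsum f G \<in> vspan (f ` F)" using lsum_mem[of G F f] finite_PowM[of G m] F by auto
  qed
qed

lemma card_span:
  assumes F: "F \<subseteq> Pow {1..m}"
  shows "card (vspan (f ` F)) = 2 ^ card F"
proof -
  have inj: "inj_on (lsum f) (Pow F)"
  proof (rule inj_onI)
    fix G G' assume G: "G \<in> Pow F" "G' \<in> Pow F" "lsum f G = lsum f G'"
    show "G = G'"
    proof (rule set_eqI)
      fix T
      show "T \<in> G \<longleftrightarrow> T \<in> G'"
      proof (cases "T \<subseteq> {1..m}")
        case True
        have "G \<subseteq> Pow {1..m}" "G' \<subseteq> Pow {1..m}" using G F by auto
        then have "dot m (lsum f G) (g T) = (T \<in> G)" "dot m (lsum f G') (g T) = (T \<in> G')"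
          using dot_lsum_g True by blast+
        then show ?thesis using G(3) by simp
      next
        case False
        then show ?thesis using G F by blast
      qed
    qed
  qed
  have fin: "finite F" using F by (rule finite_PowM)
  show ?thesis using span_eq_img[OF F] card_image[OF inj] fin by (simp add: card_Pow)
qed

lemma vdim_span:
  assumes F: "F \<subseteq> Pow {1..m}"
  shows "vdim (vspan (f ` F)) = card F"
  unfolding vdim_def
proof (rule Least_equality)
  have fin: "finite F" using F by (rule finite_PowM)
  have "card (f ` F) = card F" using card_image inj_on_subset[OF inj_f F] by blast
  then show "\<exists>B. finite B \<and> card B = card F \<and> B \<subseteq> vspan (f ` F) \<and> vspan B = vspan (f ` F)"
    using fin by (intro exI[of _ "f ` F"]) (auto intro: vspan_base)
next
  fix y assume "\<exists>B. finite B \<and> card B = y \<and> B \<subseteq> vspan (f ` F) \<and> vspan B = vspan (f ` F)"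
  then obtain B where B: "finite B" "card B = y" "vspan B = vspan (f ` F)" by blast
  have "(2::nat) ^ card F \<le> 2 ^ card B" using card_vspan_le[OF B(1)] B(3) card_span[OF F] by simp
  then show "card F \<le> y" using B(2) by simp
qed

end

interpretation monoP: dualpair m "ev_mono m" "ev_hat m"
proof
  fix T S :: "nat set" and v
  show "isvec m (ev_mono m T)" by simp
  show "T \<subseteq> {1..m} \<Longrightarrow> S \<subseteq> {1..m} \<Longrightarrow> dot m (ev_mono m T) (ev_hat m S) = (T = S)"
    by (rule dot_mono_hat)
  show "isvec m v \<Longrightarrow> v = lsum (ev_mono m) {T. T \<subseteq> {1..m} \<and> dot m v (ev_hat m T)}"
    by (rule expand_mono)
qed

interpretation hatP: dualpair m "ev_hat m" "ev_mono m"
proof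
  fix T S :: "nat set" and v
  show "isvec m (ev_hat m T)" by simp
  show "T \<subseteq> {1..m} \<Longrightarrow> S \<subseteq> {1..m} \<Longrightarrow> dot m (ev_hat m T) (ev_mono m S) = (T = S)"
    using dot_mono_hat[of S m T] dot_sym[of m "ev_hat m T"] by auto
  show "isvec m v \<Longrightarrow> v = lsum (ev_hat m) {T. T \<subseteq> {1..m} \<and> dot m v (ev_mono m T)}"
    by (rule expand_hat)
qed




lemma finM: "T \<subseteq> {1..(m::nat)} \<Longrightarrow> finite T"
  by (rule finite_subset[of _ "{1..m}"]) auto

lemma weight_mono:
  assumes "T \<subseteq> {1..m}"
  shows "weight (ev_mono m T) = 2 ^ (m - card T)"
proof -
  have "{a. ev_mono m T a} = {a. T \<subseteq> a \<and> a \<subseteq> {1..m}}" by (auto simp: mono_eq)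
  moreover have "card ({1..m} - T) = m - card T" using assms by (simp add: card_Diff_subset finite_subset)
  ultimately show ?thesis unfolding weight_def using card_interval[of "{1..m}" T] assms by simp
qed

lemma weight_hat:
  assumes "S \<subseteq> {1..m}"
  shows "weight (ev_hat m S) = 2 ^ card S"
proof -
  have "{a. ev_hat m S a} = {a. {} \<subseteq> a \<and> a \<subseteq> S}" using hat_eq[OF assms] by simp
  moreover have "finite S" using assms finite_subset by blast
  ultimately show ?thesis unfolding weight_def using card_interval[of S "{}"] by simp
qed

lemma weight_ge_of_surj:
  assumes v: "isvec m v" and sub: "Pow C \<subseteq> h ` {a. v a}" and fin: "finite C"
  shows "2 ^ card C \<le> weight v"
proof -
  have s1: "{a. v a} \<subseteq> pts m" using v unfolding isvec_def by blast
  have f1: "finite {a. v a}" using finite_subset[OF s1] by simp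
  have c1: "card (h ` {a. v a}) \<le> card {a. v a}" using card_image_le[OF f1] .
  have f2: "finite (h ` {a. v a})" using f1 by (rule finite_imageI)
  have c2: "card (Pow C) \<le> card (h ` {a. v a})" using card_mono[OF f2 sub] .
  have "card (Pow C) = 2 ^ card C" by (rule card_Pow[OF fin])
  then show ?thesis unfolding weight_def using c1 c2 by linarith
qed

lemma weight_mono_lower:
  assumes G: "G \<subseteq> Pow {1..m}" and T0: "T0 \<in> G" and mx: "\<forall>T\<in>G. card T \<le> card T0"
  shows "2 ^ (m - card T0) \<le> weight (lsum (ev_mono m) G)"
proof -
  let ?v = "lsum (ev_mono m) G"
  have finG: "finite G" using G by (rule finite_PowM)
  have T0M: "T0 \<subseteq> {1..m}" using G T0 by auto
  have finT0: "finite T0" using T0M finite_subset by blast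
  have isv: "isvec m ?v" using isvec_span[OF _ lsum_mem[OF finG subset_refl]] by auto
  have ex: "\<exists>a. ?v a \<and> a - T0 = b" if b: "b \<subseteq> {1..m} - T0" for b
  proof -
    let ?I = "{a. b \<subseteq> a \<and> a \<subseteq> b \<union> T0}"
    have finbT0: "finite (b \<union> T0)" using b finT0 finite_subset[of b "{1..m}"] by blast
    have finI: "finite ?I" by (rule finite_subset[of _ "Pow (b \<union> T0)"]) (use finbT0 in auto)
    have IM: "a \<subseteq> {1..m}" if "a \<in> ?I" for a using that b T0M by auto
    have "{a \<in> ?I. ?v a} = {a \<in> ?I. odd (card {T \<in> G. T \<subseteq> a})}"
    proof (rule Collect_cong)
      fix a show "(a \<in> ?I \<and> ?v a) = (a \<in> ?I \<and> odd (card {T \<in> G. T \<subseteq> a}))"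
      proof (rule conj_cong[OF refl])
        assume True: "a \<in> ?I"
        then have "{T \<in> G. ev_mono m T a} = {T \<in> G. T \<subseteq> a}" using IM[OF True] by (auto simp: mono_eq)
        then show "?v a = odd (card {T \<in> G. T \<subseteq> a})" unfolding lsum_def by simp
      qed
    qed
    then have "odd (card {a \<in> ?I. ?v a}) = odd (card {T \<in> G. odd (card {a \<in> ?I. T \<subseteq> a})})"
      using odd_swap[OF finI finG, of "\<lambda>a T. T \<subseteq> a"] by simp
    also have "{T \<in> G. odd (card {a \<in> ?I. T \<subseteq> a})} = {T0}"
    proof -
      have "odd (card {a \<in> ?I. T \<subseteq> a}) \<longleftrightarrow> T = T0" if "T \<in> G" for T
      proof -
        have "{a \<in> ?I. T \<subseteq> a} = {a. b \<union> T \<subseteq> a \<and> a \<subseteq> b \<union> T0}" by auto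
        then have "odd (card {a \<in> ?I. T \<subseteq> a}) \<longleftrightarrow> b \<union> T = b \<union> T0"
          using odd_interval[OF finbT0, of "b \<union> T"] by simp
        also have "\<dots> \<longleftrightarrow> T = T0"
        proof
          assume e: "b \<union> T = b \<union> T0"
          have "T0 \<subseteq> T" using e b by blast
          moreover have "finite T" using that G finM[of T m] by blast
          ultimately have "T0 = T" using mx that card_seteq[of T T0] by blast
          then show "T = T0" by simp
        qed simp
        finally show ?thesis .
      qed
      then show ?thesis using T0 by auto
    qed
    finally have "odd (card {a \<in> ?I. ?v a})" by simp
    then have "{a \<in> ?I. ?v a} \<noteq> {}" by (metis card.empty even_zero)
    then obtain a where "a \<in> ?I" "?v a" by blast
    moreover have "a - T0 = b" using \<open>a \<in> ?I\<close> b by auto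
    ultimately show ?thesis by blast
  qed
  have "Pow ({1..m} - T0) \<subseteq> (\<lambda>a. a - T0) ` {a. ?v a}"
  proof
    fix b assume "b \<in> Pow ({1..m} - T0)"
    then obtain a where "?v a" "a - T0 = b" using ex by blast
    then show "b \<in> (\<lambda>a. a - T0) ` {a. ?v a}" by blast
  qed
  from weight_ge_of_surj[OF isv this] have "2 ^ card ({1..m} - T0) \<le> weight ?v" by blast
  moreover have "card ({1..m} - T0) = m - card T0" using T0M by (simp add: card_Diff_subset finT0)
  ultimately show ?thesis by simp
qed

lemma weight_hat_lower:
  assumes G: "G \<subseteq> Pow {1..m}" and S0: "S0 \<in> G" and mn: "\<forall>S\<in>G. card S0 \<le> card S"
  shows "2 ^ card S0 \<le> weight (lsum (ev_hat m) G)"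
proof -
  let ?v = "lsum (ev_hat m) G"
  let ?C = "{1..m} - S0"
  have finG: "finite G" using G by (rule finite_PowM)
  have S0M: "S0 \<subseteq> {1..m}" using G S0 by auto
  have finS0: "finite S0" using S0M finite_subset by blast
  have isv: "isvec m ?v" using isvec_span[OF _ lsum_mem[OF finG subset_refl]] by auto
  have ex: "\<exists>a. ?v a \<and> a \<inter> S0 = b" if b: "b \<subseteq> S0" for b
  proof -
    let ?I = "{a. b \<subseteq> a \<and> a \<subseteq> b \<union> ?C}"
    have finI: "finite ?I" by (rule finite_subset[of _ "Pow {1..m}"]) (use b S0M in auto)
    have IM: "a \<subseteq> {1..m}" if "a \<in> ?I" for a using that b S0M by auto
    have "{a \<in> ?I. ?v a} = {a \<in> ?I. odd (card {S \<in> G. a \<subseteq> S})}"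
    proof (rule Collect_cong)
      fix a show "(a \<in> ?I \<and> ?v a) = (a \<in> ?I \<and> odd (card {S \<in> G. a \<subseteq> S}))"
      proof (rule conj_cong[OF refl])
        assume True: "a \<in> ?I"
        have "{S \<in> G. ev_hat m S a} = {S \<in> G. a \<subseteq> S}"
        proof (rule Collect_cong)
          fix S show "(S \<in> G \<and> ev_hat m S a) = (S \<in> G \<and> a \<subseteq> S)"
            using hat_eq[of S m a] G by auto
        qed
        then show "?v a = odd (card {S \<in> G. a \<subseteq> S})" unfolding lsum_def by simp
      qed
    qed
    then have "odd (card {a \<in> ?I. ?v a}) = odd (card {S \<in> G. odd (card {a \<in> ?I. a \<subseteq> S})})"
      using odd_swap[OF finI finG, of "\<lambda>a S. a \<subseteq> S"] by simp
    also have "{S \<in> G. odd (card {a \<in> ?I. a \<subseteq> S})} = {S0}"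
    proof -
      have "odd (card {a \<in> ?I. a \<subseteq> S}) \<longleftrightarrow> S = S0" if "S \<in> G" for S
      proof -
        have SM: "S \<subseteq> {1..m}" using that G by auto
        have "{a \<in> ?I. a \<subseteq> S} = {a. b \<subseteq> a \<and> a \<subseteq> S \<inter> (b \<union> ?C)}" by auto
        then have "odd (card {a \<in> ?I. a \<subseteq> S}) \<longleftrightarrow> b = S \<inter> (b \<union> ?C)"
          using odd_interval[of "S \<inter> (b \<union> ?C)" b] finM[OF SM] by simp
        also have "\<dots> \<longleftrightarrow> S = S0"
        proof
          assume e: "b = S \<inter> (b \<union> ?C)"
          have "S \<subseteq> S0"
          proof
            fix x assume "x \<in> S"
            show "x \<in> S0"
            proof (rule ccontr)
              assume "x \<notin> S0"
              then have "x \<in> ?C" using SM \<open>x \<in> S\<close> by auto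
              then have "x \<in> b" using e \<open>x \<in> S\<close> by blast
              then show False using b \<open>x \<notin> S0\<close> by auto
            qed
          qed
          then show "S = S0" using mn that card_seteq[OF finS0] by blast
        next
          assume "S = S0" then show "b = S \<inter> (b \<union> ?C)" using b by auto
        qed
        finally show ?thesis .
      qed
      then show ?thesis using S0 by auto
    qed
    finally have "odd (card {a \<in> ?I. ?v a})" by simp
    then have "{a \<in> ?I. ?v a} \<noteq> {}" by (metis card.empty even_zero)
    then obtain a where "a \<in> ?I" "?v a" by blast
    moreover have "a \<inter> S0 = b" using \<open>a \<in> ?I\<close> b by auto
    ultimately show ?thesis by blast
  qed
  have "Pow S0 \<subseteq> (\<lambda>a. a \<inter> S0) ` {a. ?v a}"
  proof
    fix b assume "b \<in> Pow S0"
    then obtain a where "?v a" "a \<inter> S0 = b" using ex by blast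
    then show "b \<in> (\<lambda>a. a \<inter> S0) ` {a. ?v a}" by blast
  qed
  from weight_ge_of_surj[OF isv this finS0] show ?thesis .
qed




definition RR :: "nat \<Rightarrow> nat \<Rightarrow> nat set set" where
  "RR l m = {{1..l-1} \<union> {j} | j. j \<in> {l..m}}"
definition XX :: "nat \<Rightarrow> nat \<Rightarrow> nat set set" where
  "XX l m = {T. T \<subseteq> {1..m} \<and> card T < l}"
definition ZB :: "nat \<Rightarrow> nat \<Rightarrow> nat set set" where
  "ZB l m = {S. S \<subseteq> {1..m} \<and> l < card S}"
definition Z1 :: "nat \<Rightarrow> nat \<Rightarrow> nat set set" where
  "Z1 l m = {S. S \<subseteq> {1..m} \<and> card S = l \<and> S \<notin> RR l m}"
definition ZZ :: "nat \<Rightarrow> nat \<Rightarrow> nat set set" where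
  "ZZ l m = ZB l m \<union> Z1 l m"
definition YY :: "nat \<Rightarrow> nat \<Rightarrow> nat set set" where
  "YY l m = {T. T \<subseteq> {1..m} \<and> card T + l + 1 \<le> m}"

definition SS :: "nat \<Rightarrow> nat \<Rightarrow> nat set" where
  "SS l j = {1..l-1} \<union> {j}"

lemma SS_props:
  assumes "1 \<le> l" "l \<le> j" "j \<le> m"
  shows "SS l j \<subseteq> {1..m}" "card (SS l j) = l" "j \<notin> {1..l-1}"
proof -
  show "SS l j \<subseteq> {1..m}" unfolding SS_def using assms by auto
  show j: "j \<notin> {1..l-1}" using assms by auto
  show "card (SS l j) = l" unfolding SS_def using j assms by simp
qed

lemma SS_inj:
  assumes "1 \<le> l" "l \<le> j" "l \<le> j'" "SS l j = SS l j'"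
  shows "j = j'"
proof -
  have "j \<in> SS l j'" using assms(4) unfolding SS_def by auto
  then show ?thesis unfolding SS_def using assms(2) by auto
qed

lemma RR_eq: "RR l m = SS l ` {l..m}"
  unfolding RR_def SS_def by blast

lemma RR_props:
  assumes "1 \<le> l" "S \<in> RR l m"
  shows "S \<subseteq> {1..m}" "card S = l"
proof -
  obtain j where j: "j \<in> {l..m}" "S = SS l j" using assms(2) unfolding RR_eq by blast
  show "S \<subseteq> {1..m}" "card S = l" using SS_props[OF assms(1), of j m] j by auto
qed

lemma card_RR:
  assumes "1 \<le> l" "l \<le> m"
  shows "card (RR l m) = m - l + 1"
proof -
  have "inj_on (SS l) {l..m}" using SS_inj[OF assms(1)] by (auto simp: inj_on_def)
  then have "card (RR l m) = card {l..m}" unfolding RR_eq by (rule card_image)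
  then show ?thesis using assms by simp
qed

lemma sub_PowM:
  "XX l m \<subseteq> Pow {1..m}" "ZB l m \<subseteq> Pow {1..m}" "Z1 l m \<subseteq> Pow {1..m}"
  "ZZ l m \<subseteq> Pow {1..m}" "YY l m \<subseteq> Pow {1..m}"
  unfolding XX_def ZB_def Z1_def ZZ_def YY_def by auto

lemma RR_PowM: "1 \<le> l \<Longrightarrow> RR l m \<subseteq> Pow {1..m}"
  using RR_props by blast

lemma disj:
  assumes "1 \<le> l"
  shows "XX l m \<inter> ZZ l m = {}" "XX l m \<inter> RR l m = {}" "ZZ l m \<inter> RR l m = {}"
proof -
  show "XX l m \<inter> ZZ l m = {}" unfolding XX_def ZZ_def ZB_def Z1_def by auto
  show "XX l m \<inter> RR l m = {}"
  proof (rule equals0I)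
    fix S assume "S \<in> XX l m \<inter> RR l m"
    then have "card S < l" "card S = l" using RR_props(2)[OF assms, of S m] unfolding XX_def by auto
    then show False by simp
  qed
  show "ZZ l m \<inter> RR l m = {}"
  proof (rule equals0I)
    fix S assume S: "S \<in> ZZ l m \<inter> RR l m"
    then have "card S = l" using RR_props(2)[OF assms, of S m] by auto
    then show False using S unfolding ZZ_def ZB_def Z1_def by auto
  qed
qed

lemma cover:
  assumes "1 \<le> l"
  shows "Pow {1..m} = XX l m \<union> ZZ l m \<union> RR l m"
proof
  show "Pow {1..m} \<subseteq> XX l m \<union> ZZ l m \<union> RR l m"
  proof
    fix S assume S: "S \<in> Pow {1..m}"
    consider "card S < l" | "l < card S" | "card S = l" by linarith
    then show "S \<in> XX l m \<union> ZZ l m \<union> RR l m"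
      by cases (use S in \<open>auto simp: XX_def ZZ_def ZB_def Z1_def\<close>)
  qed
  show "XX l m \<union> ZZ l m \<union> RR l m \<subseteq> Pow {1..m}" using sub_PowM RR_PowM[OF assms] by blast
qed

lemma card_sum:
  assumes "1 \<le> l"
  shows "card (XX l m) + card (ZZ l m) + card (RR l m) = 2 ^ m"
proof -
  have f: "finite (XX l m)" "finite (ZZ l m)" "finite (RR l m)"
    by (rule finite_PowM[OF sub_PowM(1)], rule finite_PowM[OF sub_PowM(4)], rule finite_PowM[OF RR_PowM[OF assms]])
  have "card (XX l m \<union> ZZ l m \<union> RR l m) = card (XX l m \<union> ZZ l m) + card (RR l m)"
    by (rule card_Un_disjoint) (use f disj[OF assms] in blast)+
  also have "card (XX l m \<union> ZZ l m) = card (XX l m) + card (ZZ l m)"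
    by (rule card_Un_disjoint) (use f disj[OF assms] in blast)+
  finally have e: "card (XX l m \<union> ZZ l m \<union> RR l m) = card (XX l m) + card (ZZ l m) + card (RR l m)" .
  have "card (Pow {1..m}) = 2 ^ m" using card_Pow[of "{1..m}"] by simp
  then show ?thesis using e cover[OF assms, of m] by simp
qed

lemma PowM_minus_ZZ: "1 \<le> l \<Longrightarrow> Pow {1..m} - ZZ l m = XX l m \<union> RR l m"
  using cover[of l m] disj[of l m] by blast

lemma PowM_minus_XX: "1 \<le> l \<Longrightarrow> Pow {1..m} - XX l m = ZZ l m \<union> RR l m"
  using cover[of l m] disj[of l m] by blast

lemma span_YB:
  assumes "1 \<le> l"
  shows "vspan (ev_mono m ` YY l m) = vspan (ev_hat m ` ZB l m)"
proof
  show "vspan (ev_mono m ` YY l m) \<subseteq> vspan (ev_hat m ` ZB l m)"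
  proof (rule vspan_sub, rule image_subsetI)
    fix T assume T: "T \<in> YY l m"
    then have TM: "T \<subseteq> {1..m}" and cT: "card T + l + 1 \<le> m" unfolding YY_def by auto
    have "\<not> dot m (ev_mono m T) (ev_mono m S)" if "S \<subseteq> {1..m}" "S \<notin> ZB l m" for S
    proof -
      have "card S \<le> l" using that unfolding ZB_def by auto
      then have "card (T \<union> S) < m" using card_Un_le[of T S] cT by linarith
      then have "T \<union> S \<noteq> {1..m}" by auto
      then show ?thesis using dot_mono_mono[OF TM that(1)] by simp
    qed
    then show "ev_mono m T \<in> vspan (ev_hat m ` ZB l m)"
      using hatP.char[OF sub_PowM(2), where v="ev_mono m T"] by simp
  qed
  show "vspan (ev_hat m ` ZB l m) \<subseteq> vspan (ev_mono m ` YY l m)"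
  proof (rule vspan_sub, rule image_subsetI)
    fix S assume S: "S \<in> ZB l m"
    then have SM: "S \<subseteq> {1..m}" and cS: "l < card S" unfolding ZB_def by auto
    have "\<not> dot m (ev_hat m S) (ev_hat m T)" if "T \<subseteq> {1..m}" "T \<notin> YY l m" for T
    proof -
      have cT: "m < card T + l + 1" using that unfolding YY_def by auto
      have "card (S \<union> T) \<le> m" using card_mono[OF _ Un_least[OF SM that(1)]] by simp
      moreover have "card S + card T = card (S \<union> T) + card (S \<inter> T)"
        using card_Un_Int[OF finM[OF SM] finM[OF that(1)]] .
      ultimately have "card (S \<inter> T) > 0" using cS cT by linarith
      then have "S \<inter> T \<noteq> {}" by auto
      then show ?thesis using dot_hat_hat[OF that(1) SM] by simp
    qed
    then show "ev_hat m S \<in> vspan (ev_mono m ` YY l m)"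
      using monoP.char[OF sub_PowM(5), where v="ev_hat m S"] by simp
  qed
qed




context dualpair
begin

lemma ker:
  assumes F: "F \<subseteq> Pow {1..m}" and H: "rs H = vspan (g ` F)"
  shows "kerM m H = vspan (f ` (Pow {1..m} - F))"
proof
  show "kerM m H \<subseteq> vspan (f ` (Pow {1..m} - F))"
  proof
    fix v assume v: "v \<in> kerM m H"
    then have iv: "isvec m v" and hv: "\<forall>h\<in>set H. \<not> dot m h v" unfolding kerM_def by auto
    have "\<not> dot m v (g S)" if "S \<subseteq> {1..m}" "S \<notin> Pow {1..m} - F" for S
    proof -
      have "S \<in> F" using that by blast
      then have "g S \<in> rs H" using H vspan_base[of "g S" "g ` F"] by blast
      then have "\<not> dot m (g S) v" using dot_span[OF hv] unfolding rs_def by blast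
      then show ?thesis using dot_sym[of m v] by simp
    qed
    then show "v \<in> vspan (f ` (Pow {1..m} - F))"
      using char[of "Pow {1..m} - F" v] iv by blast
  qed
  show "vspan (f ` (Pow {1..m} - F)) \<subseteq> kerM m H"
  proof
    fix v assume v: "v \<in> vspan (f ` (Pow {1..m} - F))"
    have cv: "isvec m v \<and> (\<forall>T. T \<subseteq> {1..m} \<and> T \<notin> Pow {1..m} - F \<longrightarrow> \<not> dot m v (g T))"
      using iffD1[OF char[of "Pow {1..m} - F" v] v] by blast
    have "\<not> dot m h v" if "h \<in> set H" for h
    proof -
      have "h \<in> vspan (g ` F)" using that H vspan_base[of h "set H"] unfolding rs_def by blast
      moreover have "\<forall>b\<in>g ` F. \<not> dot m b v"
      proof
        fix b assume "b \<in> g ` F"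
        then obtain S where S: "S \<in> F" "b = g S" by blast
        then have "\<not> dot m v (g S)" using cv F by blast
        then show "\<not> dot m b v" using S dot_sym[of m v] by simp
      qed
      ultimately show ?thesis using dot_span by blast
    qed
    then show "v \<in> kerM m H" unfolding kerM_def using cv by blast
  qed
qed

end

locale mainctx =
  fixes m l :: nat and HX HZ :: "vec list"
  assumes m1: "m \<ge> 1" and l1: "1 \<le> l" and lm: "l \<le> m"
    and hx: "rs HX = RM (int l - 1) m"
    and hz: "rs HZ = vspan (RM (int m - int l - 1) m \<union>
            {ev_hat m S | S. S \<subseteq> {1..m} \<and> card S = l \<and>
               S \<notin> {{1..l-1} \<union> {j} | j. j \<in> {l..m}}})"
begin

lemma rsX: "rs HX = vspan (ev_mono m ` XX l m)"
proof -
  have "{ev_mono m S | S. S \<subseteq> {1..m} \<and> int (card S) \<le> int l - 1} = ev_mono m ` XX l m"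
    unfolding XX_def by force
  then show ?thesis using hx unfolding RM_def by simp
qed

lemma rsZ: "rs HZ = vspan (ev_hat m ` ZZ l m)"
proof -
  have a: "{ev_mono m S | S. S \<subseteq> {1..m} \<and> int (card S) \<le> int m - int l - 1} = ev_mono m ` YY l m"
    unfolding YY_def by force
  have b: "{ev_hat m S | S. S \<subseteq> {1..m} \<and> card S = l \<and>
               S \<notin> {{1..l-1} \<union> {j} | j. j \<in> {l..m}}} = ev_hat m ` Z1 l m"
    unfolding Z1_def RR_def by blast
  have "rs HZ = vspan (vspan (ev_mono m ` YY l m) \<union> ev_hat m ` Z1 l m)"
    using hz unfolding RM_def a b by simp
  also have "\<dots> = vspan (vspan (ev_hat m ` ZB l m) \<union> ev_hat m ` Z1 l m)"
    using span_YB[OF l1] by simp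
  also have "\<dots> = vspan (ev_hat m ` ZZ l m)"
    unfolding vspan_idem_un ZZ_def image_Un ..
  finally show ?thesis .
qed

lemma kerZ: "kerM m HZ = vspan (ev_mono m ` (XX l m \<union> RR l m))"
  using monoP.ker[OF sub_PowM(4) rsZ] PowM_minus_ZZ[OF l1] by simp

lemma kerX: "kerM m HX = vspan (ev_hat m ` (ZZ l m \<union> RR l m))"
  using hatP.ker[OF sub_PowM(1) rsX] PowM_minus_XX[OF l1] by simp

lemma orth: "orth m HX HZ"
  unfolding orth_def
proof (intro ballI)
  fix h g assume h: "h \<in> set HX" and g: "g \<in> set HZ"
  have hs: "h \<in> vspan (ev_mono m ` XX l m)" using h rsX vspan_base[of h "set HX"] unfolding rs_def by blast
  have gs: "g \<in> vspan (ev_hat m ` ZZ l m)" using g rsZ vspan_base[of g "set HZ"] unfolding rs_def by blast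
  have cg: "\<forall>T. T \<subseteq> {1..m} \<and> T \<notin> ZZ l m \<longrightarrow> \<not> dot m g (ev_mono m T)"
    using iffD1[OF hatP.char[OF sub_PowM(4)] gs] by blast
  have "\<forall>b\<in>ev_mono m ` XX l m. \<not> dot m b g"
  proof
    fix b assume "b \<in> ev_mono m ` XX l m"
    then obtain T where T: "T \<in> XX l m" "b = ev_mono m T" by blast
    have "T \<notin> ZZ l m" using T disj(1)[OF l1] by blast
    moreover have "T \<subseteq> {1..m}" using T unfolding XX_def by blast
    ultimately show "\<not> dot m b g" using cg T dot_sym[of m g] by simp
  qed
  then show "\<not> dot m h g" using dot_span hs by blast
qed

lemma ranks: "rank HX = card (XX l m)" "rank HZ = card (ZZ l m)"
  unfolding rank_def rsX rsZ
  by (rule monoP.vdim_span[OF sub_PowM(1)], rule hatP.vdim_span[OF sub_PowM(4)])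

lemma k: "css_k m HX HZ = int (m - l + 1)"
proof -
  have "card (XX l m) + card (ZZ l m) + (m - l + 1) = 2 ^ m"
    using card_sum[OF l1, of m] card_RR[OF l1 lm] by simp
  then show ?thesis unfolding css_k_def ranks by linarith
qed

lemma SSR:
  assumes "i < m - l + 1"
  shows "SS l (l + i) \<in> RR l m" "SS l (l + i) \<subseteq> {1..m}" "card (SS l (l + i)) = l"
proof -
  have j: "l \<le> l + i" "l + i \<le> m" using assms lm by auto
  show "SS l (l + i) \<in> RR l m" unfolding RR_eq using j by auto
  show "SS l (l + i) \<subseteq> {1..m}" "card (SS l (l + i)) = l" using SS_props[OF l1 j] by auto
qed

lemma logical: "logical_basis m HX HZ (m - l + 1)
        (\<lambda>i. ev_mono m ({1..l-1} \<union> {l + i})) (\<lambda>i. ev_hat m ({1..l-1} \<union> {l + i}))"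
  unfolding logical_basis_def SS_def[symmetric]
proof (intro conjI allI impI)
  fix i assume i: "i < m - l + 1"
  show "ev_mono m (SS l (l + i)) \<in> kerM m HZ"
    unfolding kerZ using SSR(1)[OF i] by (intro vspan_base) blast
  show "ev_hat m (SS l (l + i)) \<in> kerM m HX"
    unfolding kerX using SSR(1)[OF i] by (intro vspan_base) blast
next
  fix i j assume i: "i < m - l + 1" and j: "j < m - l + 1"
  have "dot m (ev_mono m (SS l (l + i))) (ev_hat m (SS l (l + j))) = (SS l (l + i) = SS l (l + j))"
    by (rule dot_mono_hat[OF SSR(2)[OF i] SSR(2)[OF j]])
  also have "\<dots> = (i = j)" using SS_inj[OF l1, of "l + i" "l + j"] by auto
  finally show "dot m (ev_mono m (SS l (l + i))) (ev_hat m (SS l (l + j))) = (i = j)" .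
qed

lemma dX: "css_dX m HX HZ = 2 ^ (m - l)"
  unfolding css_dX_def min_weight_def
proof (rule cInf_eq_minimum)
  have i0: "0 < m - l + 1" by simp
  let ?v = "ev_mono m (SS l l)"
  have "?v \<in> kerM m HZ" unfolding kerZ using SSR(1)[OF i0] by (intro vspan_base) auto
  moreover have "?v \<notin> rs HX"
  proof
    assume "?v \<in> rs HX"
    then have "\<forall>T. T \<subseteq> {1..m} \<and> T \<notin> XX l m \<longrightarrow> \<not> dot m ?v (ev_hat m T)"
      using iffD1[OF monoP.char[OF sub_PowM(1)]] unfolding rsX by blast
    moreover have "SS l l \<notin> XX l m" using SSR(3)[OF i0] unfolding XX_def by simp
    ultimately have "\<not> dot m ?v (ev_hat m (SS l l))" using SSR(2)[OF i0] by simp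
    then show False using dot_mono_hat[OF SSR(2)[OF i0] SSR(2)[OF i0]] by simp
  qed
  moreover have "weight ?v = 2 ^ (m - l)" using weight_mono[OF SSR(2)[OF i0]] SSR(3)[OF i0] by simp
  ultimately have "?v \<in> kerM m HZ - rs HX" "2 ^ (m - l) = weight ?v" by auto
  then show "2 ^ (m - l) \<in> weight ` (kerM m HZ - rs HX)" by (intro image_eqI[where x="?v"])
next
  fix y assume "y \<in> weight ` (kerM m HZ - rs HX)"
  then obtain v where v: "v \<in> kerM m HZ" "v \<notin> rs HX" "y = weight v" by blast
  have F: "XX l m \<union> RR l m \<subseteq> Pow {1..m}" using sub_PowM(1) RR_PowM[OF l1] by blast
  let ?G = "{T. T \<subseteq> {1..m} \<and> dot m v (ev_hat m T)}"
  have vs: "v \<in> vspan (ev_mono m ` (XX l m \<union> RR l m))" using v(1) kerZ by simp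
  have G: "?G \<subseteq> XX l m \<union> RR l m" "v = lsum (ev_mono m) ?G"
    using monoP.coefs[OF F vs] by auto
  have finG: "finite ?G" by (rule finite_PowM[of _ m]) blast
  obtain T0 where T0: "T0 \<in> ?G" "T0 \<notin> XX l m"
  proof (rule ccontr)
    assume "\<not> thesis"
    then have "?G \<subseteq> XX l m" using that by blast
    then have "lsum (ev_mono m) ?G \<in> vspan (ev_mono m ` XX l m)" using lsum_mem[OF finG] by blast
    then show False using v(2) G(2) rsX by simp
  qed
  have "T0 \<in> RR l m" using T0 G(1) by blast
  then have cT0: "card T0 = l" using RR_props(2)[OF l1] by blast
  have mx: "\<forall>T\<in>?G. card T \<le> card T0"
  proof
    fix T assume "T \<in> ?G"
    then have "T \<in> XX l m \<union> RR l m" using G(1) by blast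
    then show "card T \<le> card T0" using cT0 RR_props(2)[OF l1, of T m] unfolding XX_def by auto
  qed
  have "2 ^ (m - card T0) \<le> weight (lsum (ev_mono m) ?G)"
    by (rule weight_mono_lower[OF _ T0(1) mx]) blast
  then show "2 ^ (m - l) \<le> y" using v(3) G(2) cT0 by simp
qed

lemma dZ: "css_dZ m HX HZ = 2 ^ l"
  unfolding css_dZ_def min_weight_def
proof (rule cInf_eq_minimum)
  have i0: "0 < m - l + 1" by simp
  let ?v = "ev_hat m (SS l l)"
  have "?v \<in> kerM m HX" unfolding kerX using SSR(1)[OF i0] by (intro vspan_base) auto
  moreover have "?v \<notin> rs HZ"
  proof
    assume "?v \<in> rs HZ"
    then have "?v \<in> vspan (ev_hat m ` ZZ l m)" unfolding rsZ .
    then have "isvec m ?v \<and> (\<forall>T. T \<subseteq> {1..m} \<and> T \<notin> ZZ l m \<longrightarrow> \<not> dot m ?v (ev_mono m T))"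
      by (rule iffD1[OF hatP.char[OF sub_PowM(4)]])
    then have "\<forall>T. T \<subseteq> {1..m} \<and> T \<notin> ZZ l m \<longrightarrow> \<not> dot m ?v (ev_mono m T)" by (rule conjunct2)
    moreover have "SS l l \<notin> ZZ l m"
    proof
      assume "SS l l \<in> ZZ l m"
      then have "SS l l \<in> ZZ l m \<inter> RR l m" using SSR(1)[OF i0] by simp
      then show False using disj(3)[OF l1] by simp
    qed
    ultimately have "\<not> dot m ?v (ev_mono m (SS l l))" using SSR(2)[OF i0] by simp
    moreover have "dot m ?v (ev_mono m (SS l l)) = dot m (ev_mono m (SS l l)) ?v" by (rule dot_sym)
    ultimately show False using dot_mono_hat[OF SSR(2)[OF i0] SSR(2)[OF i0]] by simp
  qed
  moreover have "weight ?v = 2 ^ l" using weight_hat[OF SSR(2)[OF i0]] SSR(3)[OF i0] by simp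
  ultimately have "?v \<in> kerM m HX - rs HZ" "2 ^ l = weight ?v" by auto
  then show "2 ^ l \<in> weight ` (kerM m HX - rs HZ)" by (intro image_eqI[where x="?v"])
next
  fix y assume "y \<in> weight ` (kerM m HX - rs HZ)"
  then obtain v where v: "v \<in> kerM m HX" "v \<notin> rs HZ" "y = weight v" by blast
  have F: "ZZ l m \<union> RR l m \<subseteq> Pow {1..m}" using sub_PowM(4) RR_PowM[OF l1] by blast
  let ?G = "{T. T \<subseteq> {1..m} \<and> dot m v (ev_mono m T)}"
  have vs: "v \<in> vspan (ev_hat m ` (ZZ l m \<union> RR l m))" using v(1) kerX by simp
  have G: "?G \<subseteq> ZZ l m \<union> RR l m" "v = lsum (ev_hat m) ?G"
    using hatP.coefs[OF F vs] by auto
  have finG: "finite ?G" by (rule finite_PowM[of _ m]) blast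
  obtain S0 where S0: "S0 \<in> ?G" "S0 \<notin> ZZ l m"
  proof (rule ccontr)
    assume "\<not> thesis"
    then have "?G \<subseteq> ZZ l m" using that by blast
    then have "lsum (ev_hat m) ?G \<in> vspan (ev_hat m ` ZZ l m)" using lsum_mem[OF finG] by blast
    then show False using v(2) G(2) rsZ by simp
  qed
  have "S0 \<in> RR l m" using S0 G(1) by blast
  then have cS0: "card S0 = l" using RR_props(2)[OF l1] by blast
  have mn: "\<forall>S\<in>?G. card S0 \<le> card S"
  proof
    fix S assume "S \<in> ?G"
    then have "S \<in> ZZ l m \<union> RR l m" using G(1) by blast
    then consider "S \<in> ZB l m" | "S \<in> Z1 l m" | "S \<in> RR l m" unfolding ZZ_def by blast
    then show "card S0 \<le> card S"
    proof cases
      case 1 then show ?thesis using cS0 unfolding ZB_def by simp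
    next
      case 2 then show ?thesis using cS0 unfolding Z1_def by simp
    next
      case 3 then show ?thesis using cS0 RR_props(2)[OF l1, of S m] by simp
    qed
  qed
  have "2 ^ card S0 \<le> weight (lsum (ev_hat m) ?G)"
    by (rule weight_hat_lower[OF _ S0(1) mn]) blast
  then show "2 ^ l \<le> y" using v(3) G(2) cS0 by simp
qed

end




definition sig :: "nat \<Rightarrow> nat \<Rightarrow> nat \<Rightarrow> nat set \<Rightarrow> nat set" where
  "sig m p q c = (if c \<in> pts m \<and> q \<in> c then (if p \<in> c then c - {p} else insert p c) else c)"

lemma sig_invol:
  assumes "p \<in> {1..m}" "q \<in> {1..m}" "p \<noteq> q"
  shows "sig m p q (sig m p q c) = c"
  using assms unfolding sig_def pts_def by auto

lemma sig_permutes: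
  assumes "p \<in> {1..m}" "q \<in> {1..m}" "p \<noteq> q"
  shows "sig m p q permutes pts m"
proof (rule bij_imp_permutes)
  show "bij_betw (sig m p q) (pts m) (pts m)"
  proof (rule bij_betw_byWitness[where f'="sig m p q"])
    show "\<forall>a\<in>pts m. sig m p q (sig m p q a) = a" using sig_invol[OF assms] by blast
    show "\<forall>a\<in>pts m. sig m p q (sig m p q a) = a" using sig_invol[OF assms] by blast
    show "sig m p q ` pts m \<subseteq> pts m" using assms unfolding sig_def pts_def by auto
    show "sig m p q ` pts m \<subseteq> pts m" using assms unfolding sig_def pts_def by auto
  qed
  show "\<And>x. x \<notin> pts m \<Longrightarrow> sig m p q x = x" unfolding sig_def by simp
qed

lemma vperm_vadd: "vperm \<sigma> (vadd u w) = vadd (vperm \<sigma> u) (vperm \<sigma> w)"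
  unfolding vperm_def vadd_def by auto

lemma vperm_zero: "vperm \<sigma> vzero = vzero"
  unfolding vperm_def vzero_def by auto

lemma vperm_span:
  assumes "\<forall>c\<in>C. vperm \<sigma> c \<in> vspan C" "u \<in> vspan C"
  shows "vperm \<sigma> u \<in> vspan C"
  using assms(2)
  by (rule vspan_induct_prop) (auto simp: vperm_zero vperm_vadd intro: vspan.zero vspan_vadd assms(1)[rule_format])

lemma vperm_span_img:
  assumes "u \<in> vspan B"
  shows "vperm \<sigma> u \<in> vspan (vperm \<sigma> ` B)"
  using assms
  by (rule vspan_induct_prop) (auto simp: vperm_zero vperm_vadd intro: vspan.zero vspan.add)

lemma rs_perm:
  assumes inv: "\<And>c. \<sigma> (\<sigma> c) = c" and h: "\<forall>h\<in>set H. vperm \<sigma> h \<in> rs H"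
  shows "rs (map (vperm \<sigma>) H) = rs H"
  unfolding rs_def set_map
proof
  show "vspan (vperm \<sigma> ` set H) \<subseteq> vspan (set H)"
    by (rule vspan_sub) (use h in \<open>auto simp: rs_def\<close>)
  show "vspan (set H) \<subseteq> vspan (vperm \<sigma> ` set H)"
  proof (rule vspan_sub, rule subsetI)
    fix x assume "x \<in> set H"
    then have "vperm \<sigma> (vperm \<sigma> x) \<in> vspan (vperm \<sigma> ` set H)"
      using h vperm_span_img unfolding rs_def by blast
    moreover have "vperm \<sigma> (vperm \<sigma> x) = x" unfolding vperm_def using inv by auto
    ultimately show "x \<in> vspan (vperm \<sigma> ` set H)" by simp
  qed
qed

lemma perm_mono:
  assumes p: "p \<in> {1..m}" and q: "q \<in> {1..m}" and pq: "p \<noteq> q" and T: "T \<subseteq> {1..m}"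
  shows "vperm (sig m p q) (ev_mono m T) =
    (if p \<notin> T then ev_mono m T
     else if q \<notin> T then vadd (ev_mono m T) (ev_mono m (insert q (T - {p})))
     else vadd (ev_mono m T) (ev_mono m (T - {p})))"
proof (rule ext)
  fix c
  show "vperm (sig m p q) (ev_mono m T) c =
    (if p \<notin> T then ev_mono m T
     else if q \<notin> T then vadd (ev_mono m T) (ev_mono m (insert q (T - {p})))
     else vadd (ev_mono m T) (ev_mono m (T - {p}))) c"
  proof (cases "c \<subseteq> {1..m}")
    case False
    then show ?thesis unfolding vperm_def sig_def vadd_def by (simp add: mono_eq pts_def)
  next
    case cM: True
    consider "q \<in> c" "p \<in> c" | "q \<in> c" "p \<notin> c" | "q \<notin> c" by blast
    then show ?thesis
    proof cases
      case 1
      then have s: "sig m p q c = c - {p}" using cM unfolding sig_def pts_def by simp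
      show ?thesis unfolding vperm_def vadd_def o_def s using 1 cM p q pq T
        by (auto simp: mono_eq)
    next
      case 2
      then have s: "sig m p q c = insert p c" using cM unfolding sig_def pts_def by simp
      show ?thesis unfolding vperm_def vadd_def o_def s using 2 cM p q pq T
        by (auto simp: mono_eq)
    next
      case 3
      then have s: "sig m p q c = c" using cM unfolding sig_def pts_def by simp
      show ?thesis unfolding vperm_def vadd_def o_def s using 3 cM p q pq T
        by (auto simp: mono_eq)
    qed
  qed
qed

lemma perm_hat:
  assumes p: "p \<in> {1..m}" and q: "q \<in> {1..m}" and pq: "p \<noteq> q" and S: "S \<subseteq> {1..m}"
  shows "vperm (sig m p q) (ev_hat m S) =
    (if p \<in> S \<or> q \<notin> S then ev_hat m S
     else vadd (ev_hat m S) (vadd (ev_hat m (insert p (S - {q}))) (ev_hat m (insert p S))))"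
proof (rule ext)
  fix c
  have S1: "insert p (S - {q}) \<subseteq> {1..m}" "insert p S \<subseteq> {1..m}" using S p by auto
  show "vperm (sig m p q) (ev_hat m S) c =
    (if p \<in> S \<or> q \<notin> S then ev_hat m S
     else vadd (ev_hat m S) (vadd (ev_hat m (insert p (S - {q}))) (ev_hat m (insert p S)))) c"
  proof (cases "c \<subseteq> {1..m}")
    case False
    then show ?thesis unfolding vperm_def sig_def vadd_def by (simp add: ev_hat_def pts_def)
  next
    case cM: True
    consider "q \<in> c" "p \<in> c" | "q \<in> c" "p \<notin> c" | "q \<notin> c" by blast
    then show ?thesis
    proof cases
      case 1
      then have s: "sig m p q c = c - {p}" using cM unfolding sig_def pts_def by simp
      show ?thesis unfolding vperm_def vadd_def o_def s hat_eq[OF S] hat_eq[OF S1(1)] hat_eq[OF S1(2)]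
        using 1 cM p q pq by auto
    next
      case 2
      then have s: "sig m p q c = insert p c" using cM unfolding sig_def pts_def by simp
      show ?thesis unfolding vperm_def vadd_def o_def s hat_eq[OF S] hat_eq[OF S1(1)] hat_eq[OF S1(2)]
        using 2 cM p q pq by auto
    next
      case 3
      then have s: "sig m p q c = c" using cM unfolding sig_def pts_def by simp
      show ?thesis unfolding vperm_def vadd_def o_def s hat_eq[OF S] hat_eq[OF S1(1)] hat_eq[OF S1(2)]
        using 3 cM p q pq by auto
    qed
  qed
qed




lemma mmul_trans:
  assumes "a < k" "b < k" "a \<noteq> b" "i < k"
  shows "mmul k (transvection a b) L i = (if i = a then vadd (L a) (L b) else L i)"
proof (rule ext)
  fix c
  show "mmul k (transvection a b) L i c = (if i = a then vadd (L a) (L b) else L i) c"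
  proof (cases "i = a")
    case True
    have e: "{j \<in> {..<k}. transvection a b i j \<and> L j c} = {j \<in> {a, b}. L j c}"
      using assms True unfolding transvection_def by auto
    have "odd (card {j \<in> {a, b}. L j c}) = (L a c \<noteq> L b c)"
    proof (cases "L a c"; cases "L b c")
      assume "L a c" "L b c"
      then have e2: "{j \<in> {a, b}. L j c} = {a, b}" by auto
      show ?thesis unfolding e2 using assms(3) \<open>L a c\<close> \<open>L b c\<close> by simp
    next
      assume "L a c" "\<not> L b c"
      then have e2: "{j \<in> {a, b}. L j c} = {a}" by auto
      show ?thesis unfolding e2 using \<open>L a c\<close> \<open>\<not> L b c\<close> by simp
    next
      assume "\<not> L a c" "L b c"
      then have e2: "{j \<in> {a, b}. L j c} = {b}" by auto
      show ?thesis unfolding e2 using \<open>\<not> L a c\<close> \<open>L b c\<close> by simp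
    next
      assume "\<not> L a c" "\<not> L b c"
      then have e2: "{j \<in> {a, b}. L j c} = {}" by auto
      show ?thesis unfolding e2 using \<open>\<not> L a c\<close> \<open>\<not> L b c\<close> by simp
    qed
    then show ?thesis unfolding mmul_def e using True by (simp add: vadd_def)
  next
    case False
    have e: "{j \<in> {..<k}. transvection a b i j \<and> L j c} = {j \<in> {i}. L j c}"
      using assms False unfolding transvection_def by auto
    have "{j \<in> {i}. L j c} = (if L i c then {i} else {})" by auto
    then show ?thesis unfolding mmul_def e using False by simp
  qed
qed

lemma trans_inv:
  assumes "a < k" "b < k" "a \<noteq> b" "i < k" "j < k"
  shows "odd (card {t \<in> {..<k}. transvection a b i t \<and> transvection b a j t}) = (i = j)"
proof -
  have A: "transvection a b i t = (if i = a then t \<in> {a, b} else t = i)" for t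
    using assms(3) unfolding transvection_def by auto
  have B: "transvection b a j t = (if j = b then t \<in> {a, b} else t = j)" for t
    using assms(3) unfolding transvection_def by auto
  show ?thesis
  proof (cases "i = a"; cases "j = b")
    assume "i = a" "j = b"
    then have "{t \<in> {..<k}. transvection a b i t \<and> transvection b a j t} = {a, b}"
      unfolding A B using assms by auto
    then show ?thesis using assms \<open>i = a\<close> \<open>j = b\<close> by simp
  next
    assume "i = a" "j \<noteq> b"
    then have "{t \<in> {..<k}. transvection a b i t \<and> transvection b a j t} = (if j = a then {a} else {})"
      unfolding A B using assms by auto
    then show ?thesis using assms \<open>i = a\<close> \<open>j \<noteq> b\<close> by auto
  next
    assume "i \<noteq> a" "j = b"
    then have "{t \<in> {..<k}. transvection a b i t \<and> transvection b a j t} = (if i = b then {b} else {})"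
      unfolding A B using assms by auto
    then show ?thesis using assms \<open>i \<noteq> a\<close> \<open>j = b\<close> by auto
  next
    assume "i \<noteq> a" "j \<noteq> b"
    then have "{t \<in> {..<k}. transvection a b i t \<and> transvection b a j t} = (if i = j then {i} else {})"
      unfolding A B using assms by auto
    then show ?thesis by auto
  qed
qed

lemma SS_pm:
  assumes "l \<le> p" "l \<le> q" "p \<noteq> q"
  shows "insert q (SS l p - {p}) = SS l q" "insert p (SS l q - {q}) = SS l p"
  using assms unfolding SS_def by auto

context mainctx
begin

lemma XX_closed:
  assumes p: "p \<in> {1..m}" and q: "q \<in> {1..m}" and pq: "p \<noteq> q" and T: "T \<in> XX l m"
  shows "vperm (sig m p q) (ev_mono m T) \<in> vspan (ev_mono m ` XX l m)"
proof -
  have TM: "T \<subseteq> {1..m}" and cT: "card T < l" using T unfolding XX_def by auto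
  have fT: "finite T" using finM[OF TM] .
  have b0: "ev_mono m T \<in> vspan (ev_mono m ` XX l m)" using T by (intro vspan_base) blast
  show ?thesis
  proof (cases "p \<in> T")
    case False
    then show ?thesis using perm_mono[OF p q pq TM] b0 by simp
  next
    case pT: True
    show ?thesis
    proof (cases "q \<in> T")
      case False
      have "card T > 0" using pT fT card_gt_0_iff by blast
      then have "card (insert q (T - {p})) = card T"
        using False pT fT by (simp add: card_Diff_singleton)
      then have "insert q (T - {p}) \<in> XX l m" using TM q cT unfolding XX_def by auto
      then have "ev_mono m (insert q (T - {p})) \<in> vspan (ev_mono m ` XX l m)" by (intro vspan_base) blast
      then show ?thesis using perm_mono[OF p q pq TM] b0 pT False by (simp add: vspan_vadd)
    next
      case True
      have "card (T - {p}) \<le> card T" using fT by (simp add: card_mono)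
      then have "T - {p} \<in> XX l m" using TM cT unfolding XX_def by auto
      then have "ev_mono m (T - {p}) \<in> vspan (ev_mono m ` XX l m)" by (intro vspan_base) blast
      then show ?thesis using perm_mono[OF p q pq TM] b0 pT True by (simp add: vspan_vadd)
    qed
  qed
qed

lemma ZZ_closed:
  assumes p: "p \<in> {l..m}" and q: "q \<in> {l..m}" and pq: "p \<noteq> q" and S: "S \<in> ZZ l m"
  shows "vperm (sig m p q) (ev_hat m S) \<in> vspan (ev_hat m ` ZZ l m)"
proof -
  have pM: "p \<in> {1..m}" and qM: "q \<in> {1..m}" using p q l1 by auto
  have SM: "S \<subseteq> {1..m}" using S sub_PowM(4) by blast
  have fS: "finite S" using finM[OF SM] .
  have cS: "l \<le> card S" using S unfolding ZZ_def ZB_def Z1_def by auto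
  have b0: "ev_hat m S \<in> vspan (ev_hat m ` ZZ l m)" using S by (intro vspan_base) blast
  show ?thesis
  proof (cases "p \<in> S \<or> q \<notin> S")
    case True
    then show ?thesis using perm_hat[OF pM qM pq SM] b0 by simp
  next
    case False
    then have pS: "p \<notin> S" and qS: "q \<in> S" by auto
    have c1: "card (insert p S) = card S + 1" using pS fS by simp
    then have i1: "insert p S \<in> ZZ l m" using SM pM cS unfolding ZZ_def ZB_def by auto
    have "card S > 0" using qS fS card_gt_0_iff by blast
    then have c2: "card (insert p (S - {q})) = card S" using pS qS fS pq by (simp add: card_Diff_singleton)
    have S2M: "insert p (S - {q}) \<subseteq> {1..m}" using SM pM by auto
    have i2: "insert p (S - {q}) \<in> ZZ l m"
    proof (cases "l < card S")
      case True
      then show ?thesis using c2 S2M unfolding ZZ_def ZB_def by auto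
    next
      case False
      then have "S \<in> Z1 l m" using S unfolding ZZ_def ZB_def by auto
      then have cl: "card S = l" and nR: "S \<notin> RR l m" unfolding Z1_def by auto
      have "insert p (S - {q}) \<notin> RR l m"
      proof
        assume "insert p (S - {q}) \<in> RR l m"
        then obtain j where j: "j \<in> {l..m}" "insert p (S - {q}) = SS l j" unfolding RR_eq by blast
        have "p \<in> SS l j" using j(2) by blast
        then have "p = j" using p unfolding SS_def by auto
        have "S - {q} = insert p (S - {q}) - {p}" using pS by auto
        also have "\<dots> = SS l p - {p}" using j(2) \<open>p = j\<close> by simp
        also have "\<dots> = {1..l-1}" using p unfolding SS_def by auto
        finally have "S - {q} = {1..l-1}" .
        then have "S = SS l q" using qS unfolding SS_def by auto
        then show False using nR q unfolding RR_eq by auto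
      qed
      then show ?thesis using c2 cl S2M unfolding ZZ_def Z1_def by auto
    qed
    have "ev_hat m (insert p S) \<in> vspan (ev_hat m ` ZZ l m)" using i1 by (intro vspan_base) blast
    moreover have "ev_hat m (insert p (S - {q})) \<in> vspan (ev_hat m ` ZZ l m)" using i2 by (intro vspan_base) blast
    ultimately show ?thesis using perm_hat[OF pM qM pq SM] b0 pS qS by (simp add: vspan_vadd)
  qed
qed

lemma impl:
  assumes a: "a < m - l + 1" and b: "b < m - l + 1" and ab: "a \<noteq> b"
  shows "implements m HX HZ (m - l + 1)
      (\<lambda>i. ev_mono m ({1..l-1} \<union> {l + i})) (\<lambda>i. ev_hat m ({1..l-1} \<union> {l + i}))
      (sig m (l + a) (l + b)) (transvection a b)"
proof -
  let ?k = "m - l + 1"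
  let ?p = "l + a" and ?q = "l + b"
  let ?s = "sig m ?p ?q"
  let ?LX = "\<lambda>i. ev_mono m (SS l (l + i))" and ?LZ = "\<lambda>i. ev_hat m (SS l (l + i))"
  have p: "?p \<in> {l..m}" and q: "?q \<in> {l..m}" using a b lm by auto
  have pM: "?p \<in> {1..m}" and qM: "?q \<in> {1..m}" using p q l1 by auto
  have pq: "?p \<noteq> ?q" using ab by simp
  have inv: "\<And>c. ?s (?s c) = c" using sig_invol[OF pM qM pq] .
  have rX: "rs (map (vperm ?s) HX) = rs HX"
  proof (rule rs_perm[OF inv], rule ballI)
    fix h assume "h \<in> set HX"
    then have "h \<in> vspan (ev_mono m ` XX l m)" using rsX vspan_base[of h "set HX"] unfolding rs_def by blast
    moreover have "\<forall>c\<in>ev_mono m ` XX l m. vperm ?s c \<in> vspan (ev_mono m ` XX l m)"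
      using XX_closed[OF pM qM pq] by blast
    ultimately have "vperm ?s h \<in> vspan (ev_mono m ` XX l m)" by (intro vperm_span)
    then show "vperm ?s h \<in> rs HX" using rsX by simp
  qed
  have rZ: "rs (map (vperm ?s) HZ) = rs HZ"
  proof (rule rs_perm[OF inv], rule ballI)
    fix h assume "h \<in> set HZ"
    then have "h \<in> vspan (ev_hat m ` ZZ l m)" using rsZ vspan_base[of h "set HZ"] unfolding rs_def by blast
    moreover have "\<forall>c\<in>ev_hat m ` ZZ l m. vperm ?s c \<in> vspan (ev_hat m ` ZZ l m)"
      using ZZ_closed[OF p q pq] by blast
    ultimately have "vperm ?s h \<in> vspan (ev_hat m ` ZZ l m)" by (intro vperm_span)
    then show "vperm ?s h \<in> rs HZ" using rsZ by simp
  qed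
  have X: "vadd (vperm ?s (?LX i)) (mmul ?k (transvection a b) ?LX i) \<in> rs HX" if i: "i < ?k" for i
  proof -
    have TM: "SS l (l + i) \<subseteq> {1..m}" using SSR(2)[OF i] .
    have pT: "?p \<in> SS l (l + i) \<longleftrightarrow> i = a" unfolding SS_def by auto
    have qT: "?q \<in> SS l (l + i) \<longleftrightarrow> i = b" unfolding SS_def by auto
    have "vperm ?s (?LX i) = mmul ?k (transvection a b) ?LX i"
    proof (cases "i = a")
      case True
      then have "vperm ?s (?LX i) = vadd (?LX a) (?LX b)"
        using perm_mono[OF pM qM pq TM] pT qT ab SS_pm(1)[of l ?p ?q] pq by simp
      then show ?thesis using mmul_trans[OF a b ab i] True by simp
    next
      case False
      then show ?thesis using perm_mono[OF pM qM pq TM] pT mmul_trans[OF a b ab i] by simp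
    qed
    then show ?thesis by (simp add: vadd_self rs_def vspan.zero)
  qed
  have Z: "vadd (vperm ?s (?LZ i)) (mmul ?k (transvection b a) ?LZ i) \<in> rs HZ" if i: "i < ?k" for i
  proof (cases "i = b")
    case False
    have SM: "SS l (l + i) \<subseteq> {1..m}" using SSR(2)[OF i] .
    have qT: "?q \<notin> SS l (l + i)" using False unfolding SS_def by auto
    have "vperm ?s (?LZ i) = mmul ?k (transvection b a) ?LZ i"
      using perm_hat[OF pM qM pq SM] qT mmul_trans[OF b a ab[symmetric] i] False by simp
    then show ?thesis by (simp add: vadd_self rs_def vspan.zero)
  next
    case True
    let ?S = "SS l (l + b)"
    have SM: "?S \<subseteq> {1..m}" using SSR(2)[OF b] .
    have pS: "?p \<notin> ?S" using ab unfolding SS_def by auto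
    have qS: "?q \<in> ?S" unfolding SS_def by auto
    have "vperm ?s (?LZ i) = vadd (?LZ b) (vadd (?LZ a) (ev_hat m (insert ?p ?S)))"
      using perm_hat[OF pM qM pq SM] pS qS True SS_pm(2)[of l ?p ?q] pq by simp
    moreover have "mmul ?k (transvection b a) ?LZ i = vadd (?LZ b) (?LZ a)"
      using mmul_trans[OF b a ab[symmetric] i] True by simp
    ultimately have e: "vadd (vperm ?s (?LZ i)) (mmul ?k (transvection b a) ?LZ i) = ev_hat m (insert ?p ?S)"
      unfolding vadd_def by auto
    have cS: "card ?S = l" using SSR(3)[OF b] .
    have "card (insert ?p ?S) = l + 1" using cS pS finM[OF SM] by simp
    then have "insert ?p ?S \<in> ZZ l m" using SM pM unfolding ZZ_def ZB_def by auto
    then have "ev_hat m (insert ?p ?S) \<in> rs HZ" unfolding rsZ by (intro vspan_base) blast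
    then show ?thesis using e by simp
  qed
  show ?thesis
    unfolding implements_def SS_def[symmetric]
  proof (intro conjI)
    show "?s permutes pts m" by (rule sig_permutes[OF pM qM pq])
    show "rs (map (vperm ?s) HX) = rs HX" by (rule rX)
    show "rs (map (vperm ?s) HZ) = rs HZ" by (rule rZ)
    show "\<exists>B. (\<forall>i<?k. \<forall>j<?k. odd (card {t \<in> {..<?k}. transvection a b i t \<and> B j t}) = (i = j)) \<and>
          (\<forall>i<?k. vadd (vperm ?s (?LX i)) (mmul ?k (transvection a b) ?LX i) \<in> rs HX) \<and>
          (\<forall>i<?k. vadd (vperm ?s (?LZ i)) (mmul ?k B ?LZ i) \<in> rs HZ)"
    proof (intro exI[of _ "transvection b a"] conjI allI impI)
      fix i j assume "i < ?k" "j < ?k"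
      then show "odd (card {t \<in> {..<?k}. transvection a b i t \<and> transvection b a j t}) = (i = j)"
        by (rule trans_inv[OF a b ab])
    next
      fix i assume "i < ?k"
      then show "vadd (vperm ?s (?LX i)) (mmul ?k (transvection a b) ?LX i) \<in> rs HX" by (rule X)
    next
      fix i assume "i < ?k"
      then show "vadd (vperm ?s (?LZ i)) (mmul ?k (transvection b a) ?LZ i) \<in> rs HZ" by (rule Z)
    qed
  qed
qed

end




theorem mainTheorem12:
  fixes m l :: nat and HX HZ :: "vec list"
  assumes "m \<ge> 1" and "1 \<le> l" and "l \<le> m"
    and "rs HX = RM (int l - 1) m"
    and "rs HZ = vspan (RM (int m - int l - 1) m \<union>
            {ev_hat m S | S. S \<subseteq> {1..m} \<and> card S = l \<and>
               S \<notin> {{1..l-1} \<union> {j} | j. j \<in> {l..m}}})"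
  shows "orth m HX HZ
    \<and> css_k m HX HZ = int (m - l + 1)
    \<and> css_d m HX HZ = min (2^(m-l)) (2^l)
    \<and> phantom m HX HZ
    \<and> logical_basis m HX HZ (m - l + 1)
        (\<lambda>i. ev_mono m ({1..l-1} \<union> {l + i})) (\<lambda>i. ev_hat m ({1..l-1} \<union> {l + i}))"
proof -
  interpret mainctx m l HX HZ
    by (rule mainctx.intro) (rule assms)+
  have nk: "nat (css_k m HX HZ) = m - l + 1" using k by simp
  have ph: "phantom m HX HZ"
    unfolding phantom_def nk
  proof (rule exI[of _ "\<lambda>i. ev_mono m ({1..l-1} \<union> {l + i})"],
         rule exI[of _ "\<lambda>i. ev_hat m ({1..l-1} \<union> {l + i})"], intro conjI allI impI)
    show "logical_basis m HX HZ (m - l + 1)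
        (\<lambda>i. ev_mono m ({1..l-1} \<union> {l + i})) (\<lambda>i. ev_hat m ({1..l-1} \<union> {l + i}))"
      by (rule logical)
  next
    fix a b assume "a < m - l + 1" "b < m - l + 1" "a \<noteq> b"
    then show "\<exists>\<sigma>. implements m HX HZ (m - l + 1)
        (\<lambda>i. ev_mono m ({1..l-1} \<union> {l + i})) (\<lambda>i. ev_hat m ({1..l-1} \<union> {l + i})) \<sigma> (transvection a b)"
      using impl by blast
  qed
  have d: "css_d m HX HZ = min (2^(m-l)) (2^l)" unfolding css_d_def dX dZ ..
  show ?thesis using orth k d ph logical by blast
qed


end
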